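(* Let $\operatorname{R}_3=\{a_0,a_1,a_2\}$ be the dihedral quandle of order $3$, with $a_ia_j=a_{2j-i \pmod 3}$. Then $\operatorname{Aut}(\mathbb{Z}[\operatorname{R}_3])\cong\Sigma_3\cong\operatorname{Aut}(\operatorname{R}_3)$.
   Context: For a quandle $Q$, the quandle ring $\mathbb{Z}[Q]$ is the free abelian group with basis $Q$, with multiplication $\big(\sum_i\alpha_i q_i\big)\big(\sum_j\beta_j q_j\big)=\sum_{i,j}\alpha_i\beta_j (q_iq_j)$. $\operatorname{Aut}(\mathbb{Z}[Q])$ denotes the group of ring automorphisms of $\mathbb{Z}[Q]$, $\operatorname{Aut}(Q)$ the group of quandle automorphisms of $Q$, and $\Sigma_3$ the symmetric group on three letters. *)

theory Defs
  imports "HOL-Algebra.Bij" "HOL-Algebra.Sym_Groups"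
begin

text \<open>Quandle ring Z[Q] of a finite quandle (Q, op): elements are integer-valued
  functions on the underlying type supported in Q (the free abelian group on Q).\<close>

definition qring_carrier :: "'a set \<Rightarrow> ('a \<Rightarrow> int) set" where
  "qring_carrier Q = {x. \<forall>q. q \<notin> Q \<longrightarrow> x q = 0}"

definition qring_add :: "('a \<Rightarrow> int) \<Rightarrow> ('a \<Rightarrow> int) \<Rightarrow> ('a \<Rightarrow> int)" where
  "qring_add x y = (\<lambda>q. x q + y q)"

definition qring_mult :: "'a set \<Rightarrow> ('a \<Rightarrow> 'a \<Rightarrow> 'a) \<Rightarrow> ('a \<Rightarrow> int) \<Rightarrow> ('a \<Rightarrow> int) \<Rightarrow> ('a \<Rightarrow> int)" where
  "qring_mult Q op x y = (\<lambda>q. \<Sum>(p, r) \<in> {(p, r). p \<in> Q \<and> r \<in> Q \<and> op p r = q}. x p * y r)"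

definition qring_auts :: "'a set \<Rightarrow> ('a \<Rightarrow> 'a \<Rightarrow> 'a) \<Rightarrow> (('a \<Rightarrow> int) \<Rightarrow> ('a \<Rightarrow> int)) set" where
  "qring_auts Q op = {f \<in> Bij (qring_carrier Q).
     \<forall>x \<in> qring_carrier Q. \<forall>y \<in> qring_carrier Q.
        f (qring_add x y) = qring_add (f x) (f y) \<and>
        f (qring_mult Q op x y) = qring_mult Q op (f x) (f y)}"

definition qring_Aut :: "'a set \<Rightarrow> ('a \<Rightarrow> 'a \<Rightarrow> 'a) \<Rightarrow> (('a \<Rightarrow> int) \<Rightarrow> ('a \<Rightarrow> int)) monoid" where
  "qring_Aut Q op = (BijGroup (qring_carrier Q))\<lparr>carrier := qring_auts Q op\<rparr>"

definition quandle_Aut :: "'a set \<Rightarrow> ('a \<Rightarrow> 'a \<Rightarrow> 'a) \<Rightarrow> ('a \<Rightarrow> 'a) monoid" where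
  "quandle_Aut Q op = (BijGroup Q)\<lparr>carrier :=
     {f \<in> Bij Q. \<forall>x \<in> Q. \<forall>y \<in> Q. f (op x y) = op (f x) (f y)}\<rparr>"

text \<open>Dihedral quandle R_3 = {a_0, a_1, a_2}, a_i is encoded as i; a_i a_j = a_{2j - i mod 3}.\<close>
definition R3 :: "nat set" where "R3 = {0, 1, 2}"

definition R3_op :: "nat \<Rightarrow> nat \<Rightarrow> nat" where
  "R3_op i j = (2 * j + 3 - i) mod 3"

end

theory Submission
  imports Defs
begin


definition dl :: "nat \<Rightarrow> nat \<Rightarrow> int" where "dl i = (\<lambda>q. if q = i then 1 else 0)"

abbreviation "Cr \<equiv> qring_carrier R3"

lemma mult_set0: "{(p, r). p \<in> R3 \<and> r \<in> R3 \<and> R3_op p r = 0} = {(0,0),(1,2),(2,1)}"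
  by (auto simp: R3_def R3_op_def)
lemma mult_set1: "{(p, r). p \<in> R3 \<and> r \<in> R3 \<and> R3_op p r = 1} = {(1,1),(0,2),(2,0)}"
  by (auto simp: R3_def R3_op_def)
lemma mult_set2: "{(p, r). p \<in> R3 \<and> r \<in> R3 \<and> R3_op p r = 2} = {(2,2),(0,1),(1,0)}"
  by (auto simp: R3_def R3_op_def)
lemma mult_set3: "q \<notin> R3 \<Longrightarrow> {(p, r). p \<in> R3 \<and> r \<in> R3 \<and> R3_op p r = q} = {}"
  by (auto simp: R3_def R3_op_def)

lemma mult_R3: "qring_mult R3 R3_op x y = (\<lambda>q. if q = 0 then x 0 * y 0 + x 1 * y 2 + x 2 * y 1
   else if q = 1 then x 1 * y 1 + x 0 * y 2 + x 2 * y 0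
   else if q = 2 then x 2 * y 2 + x 0 * y 1 + x 1 * y 0 else 0)"
proof
  fix q
  show "qring_mult R3 R3_op x y q = (if q = 0 then x 0 * y 0 + x 1 * y 2 + x 2 * y 1
   else if q = 1 then x 1 * y 1 + x 0 * y 2 + x 2 * y 0
   else if q = 2 then x 2 * y 2 + x 0 * y 1 + x 1 * y 0 else 0)"
  proof -
    consider "q = 0" | "q = 1" | "q = 2" | "q \<notin> R3" by (auto simp: R3_def)
    then show ?thesis
    proof cases
      case 1 then show ?thesis unfolding qring_mult_def by (simp only: mult_set0) simp
    next
      case 2 then show ?thesis unfolding qring_mult_def by (simp only: mult_set1) simp
    next
      case 3 then show ?thesis unfolding qring_mult_def by (simp only: mult_set2) simp
    next
      case 4
      then have "q \<noteq> 0" "q \<noteq> 1" "q \<noteq> 2" by (auto simp: R3_def)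
      have "qring_mult R3 R3_op x y q = 0" unfolding qring_mult_def by (simp only: mult_set3[OF 4] sum.empty)
      with \<open>q \<noteq> 0\<close> \<open>q \<noteq> 1\<close> \<open>q \<noteq> 2\<close> show ?thesis by simp
    qed
  qed
qed

lemma idem_int:
  fixes a b c :: int
  assumes "a*a + 2*b*c = a" "b*b + 2*a*c = b" "c*c + 2*a*b = c"
  shows "(a=0 \<and> b=0 \<and> c=0) \<or> (a=1 \<and> b=0 \<and> c=0) \<or> (a=0 \<and> b=1 \<and> c=0) \<or> (a=0 \<and> b=0 \<and> c=1)"
proof -
  have ab: "(a - b) * (a + b - 2*c - 1) = 0" using assms by (simp add: algebra_simps)
  have ac: "(a - c) * (a + c - 2*b - 1) = 0" using assms by (simp add: algebra_simps)
  have bc: "(b - c) * (b + c - 2*a - 1) = 0" using assms by (simp add: algebra_simps)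
  show ?thesis
  proof (cases "a = b")
    case True
    show ?thesis
    proof (cases "a = c")
      case True
      with \<open>a = b\<close> assms have "3*a*a = a" by (simp add: algebra_simps)
      then have "a = 0" by (smt (verit) mult_cancel_right1 mult_le_cancel_right1)
      then show ?thesis using \<open>a = b\<close> True by simp
    next
      case False
      with ac have "a + c - 2*b - 1 = 0" by simp
      with \<open>a = b\<close> have c: "c = a + 1" by simp
      with assms \<open>a = b\<close> have "a*a + 2*a*(a+1) = a" by simp
      then have "a * (3*a + 1) = 0" by (simp add: algebra_simps)
      then have "a = 0" by auto
      then show ?thesis using c \<open>a = b\<close> by simp
    qed
  next
    case False
    with ab have 1: "a + b - 2*c - 1 = 0" by simp
    show ?thesis
    proof (cases "a = c")
      case True
      with 1 have b: "b = a + 1" by simp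
      with assms True have "a*a + 2*(a+1)*a = a" by simp
      then have "a * (3*a + 1) = 0" by (simp add: algebra_simps)
      then have "a = 0" by auto
      then show ?thesis using b True by simp
    next
      case False
      with ac have 2: "a + c - 2*b - 1 = 0" by simp
      show ?thesis
      proof (cases "b = c")
        case True
        with 1 have a: "a = b + 1" by simp
        with assms True have "b*b + 2*(b+1)*b = b" by simp
        then have "b * (3*b + 1) = 0" by (simp add: algebra_simps)
        then have "b = 0" by auto
        then show ?thesis using a True by simp
      next
        case False
        with bc have "b + c - 2*a - 1 = 0" by simp
        with 1 2 show ?thesis by simp
      qed
    qed
  qed
qed

lemma R3_cases: "i \<in> R3 \<longleftrightarrow> i = 0 \<or> i = 1 \<or> i = 2" by (auto simp: R3_def)

lemma dl_in: "i \<in> R3 \<Longrightarrow> dl i \<in> Cr"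
  by (auto simp: dl_def qring_carrier_def)

lemma dl_inj: "dl i = dl j \<Longrightarrow> i = j"
  unfolding dl_def by (drule fun_cong[of _ _ i]) (auto split: if_splits)

lemma dl_ne0: "dl i \<noteq> (\<lambda>q. 0)"
  unfolding dl_def by (metis one_neq_zero)

lemma zero_in: "(\<lambda>q. 0) \<in> Cr" by (simp add: qring_carrier_def)

lemma dl_idem: "i \<in> R3 \<Longrightarrow> qring_mult R3 R3_op (dl i) (dl i) = dl i"
  unfolding mult_R3 R3_cases by (auto simp: dl_def)

lemma carrier_eq: "v \<in> Cr \<Longrightarrow> v = (\<lambda>q. if q = 0 then v 0 else if q = 1 then v 1 else if q = 2 then v 2 else 0)"
  by (rule ext) (auto simp: qring_carrier_def R3_cases)

lemma idem_carrier:
  assumes "v \<in> Cr" "qring_mult R3 R3_op v v = v"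
  shows "v = (\<lambda>q. 0) \<or> (\<exists>j\<in>R3. v = dl j)"
proof -
  have e0: "v 0 * v 0 + 2 * v 1 * v 2 = v 0" using fun_cong[OF assms(2), of 0]
    unfolding mult_R3 by (simp add: algebra_simps)
  have e1: "v 1 * v 1 + 2 * v 0 * v 2 = v 1" using fun_cong[OF assms(2), of 1]
    unfolding mult_R3 by (simp add: algebra_simps)
  have e2: "v 2 * v 2 + 2 * v 0 * v 1 = v 2" using fun_cong[OF assms(2), of 2]
    unfolding mult_R3 by (simp add: algebra_simps)
  have E: "v = (\<lambda>q. if q = 0 then v 0 else if q = 1 then v 1 else if q = 2 then v 2 else 0)"
    by (rule carrier_eq[OF assms(1)])
  from idem_int[OF e0 e1 e2] show ?thesis
  proof (elim disjE)
    assume "v 0 = 0 \<and> v 1 = 0 \<and> v 2 = 0" then show ?thesis by (subst E) auto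
  next
    assume "v 0 = 1 \<and> v 1 = 0 \<and> v 2 = 0"
    then have "v = dl 0" by (subst E) (auto simp: dl_def)
    then show ?thesis by (auto simp: R3_cases)
  next
    assume "v 0 = 0 \<and> v 1 = 1 \<and> v 2 = 0"
    then have "v = dl 1" by (subst E) (auto simp: dl_def)
    then show ?thesis by (auto simp: R3_cases)
  next
    assume "v 0 = 0 \<and> v 1 = 0 \<and> v 2 = 1"
    then have "v = dl 2" by (subst E) (auto simp: dl_def)
    then show ?thesis by (auto simp: R3_cases)
  qed
qed

lemma aut_facts:
  assumes "f \<in> qring_auts R3 R3_op"
  shows "f \<in> Cr \<rightarrow> Cr" "inj_on f Cr" "f \<in> extensional Cr" "bij_betw f Cr Cr"
    "\<And>x y. x \<in> Cr \<Longrightarrow> y \<in> Cr \<Longrightarrow> f (qring_add x y) = qring_add (f x) (f y)"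
    "\<And>x y. x \<in> Cr \<Longrightarrow> y \<in> Cr \<Longrightarrow> f (qring_mult R3 R3_op x y) = qring_mult R3 R3_op (f x) (f y)"
  using assms by (auto simp: qring_auts_def Bij_def bij_betw_def)

lemma aut_zero:
  assumes "f \<in> qring_auts R3 R3_op"
  shows "f (\<lambda>q. 0) = (\<lambda>q. 0)"
proof -
  have "f (\<lambda>q. 0) = f (qring_add (\<lambda>q. 0) (\<lambda>q. 0))" by (simp add: qring_add_def)
  also have "\<dots> = qring_add (f (\<lambda>q. 0)) (f (\<lambda>q. 0))" using aut_facts(5)[OF assms zero_in zero_in] .
  finally show ?thesis unfolding qring_add_def by (metis add_cancel_right_right)
qed

lemma aut_dl:
  assumes "f \<in> qring_auts R3 R3_op" "i \<in> R3"
  shows "\<exists>j\<in>R3. f (dl i) = dl j"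
proof -
  have v: "f (dl i) \<in> Cr" using aut_facts(1)[OF assms(1)] dl_in[OF assms(2)] by auto
  have "qring_mult R3 R3_op (f (dl i)) (f (dl i)) = f (dl i)"
    using aut_facts(6)[OF assms(1) dl_in[OF assms(2)] dl_in[OF assms(2)]] dl_idem[OF assms(2)] by simp
  from idem_carrier[OF v this] show ?thesis
  proof
    assume "f (dl i) = (\<lambda>q. 0)"
    then have "f (dl i) = f (\<lambda>q. 0)" using aut_zero[OF assms(1)] by simp
    then have "dl i = (\<lambda>q. 0)" using aut_facts(2)[OF assms(1)] dl_in[OF assms(2)] zero_in
      by (auto dest: inj_onD)
    with dl_ne0 show ?thesis by blast
  qed
qed

lemma aut_scal_nat:
  assumes "f \<in> qring_auts R3 R3_op" "y \<in> Cr"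
  shows "f (\<lambda>q. int n * y q) = (\<lambda>q. int n * f y q)"
proof (induction n)
  case 0
  then show ?case using aut_zero[OF assms(1)] by simp
next
  case (Suc n)
  have yn: "(\<lambda>q. int n * y q) \<in> Cr" using assms(2) by (simp add: qring_carrier_def)
  have "(\<lambda>q. int (Suc n) * y q) = qring_add (\<lambda>q. int n * y q) y" by (simp add: qring_add_def algebra_simps)
  then have "f (\<lambda>q. int (Suc n) * y q) = qring_add (f (\<lambda>q. int n * y q)) (f y)"
    using aut_facts(5)[OF assms(1) yn assms(2)] by simp
  then show ?case using Suc by (simp add: qring_add_def algebra_simps)
qed

lemma aut_scal:
  assumes "f \<in> qring_auts R3 R3_op" "y \<in> Cr"
  shows "f (\<lambda>q. n * y q) = (\<lambda>q. n * f y q)"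
proof (cases "n \<ge> 0")
  case True
  then obtain m where "n = int m" by (metis nonneg_int_cases)
  then show ?thesis using aut_scal_nat[OF assms] by simp
next
  case False
  then obtain m where m: "n = - int m" by (metis neg_int_cases less_le not_le)
  have a: "(\<lambda>q. int m * y q) \<in> Cr" "(\<lambda>q. - int m * y q) \<in> Cr" using assms(2) by (auto simp: qring_carrier_def)
  have "qring_add (\<lambda>q. - int m * y q) (\<lambda>q. int m * y q) = (\<lambda>q. 0)" by (simp add: qring_add_def)
  then have "qring_add (f (\<lambda>q. - int m * y q)) (f (\<lambda>q. int m * y q)) = (\<lambda>q. 0)"
    using aut_facts(5)[OF assms(1) a(2) a(1)] aut_zero[OF assms(1)] by simp
  then have "\<And>q. f (\<lambda>q. - int m * y q) q + int m * f y q = 0"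
    using aut_scal_nat[OF assms] unfolding qring_add_def by metis
  then have "f (\<lambda>q. - int m * y q) = (\<lambda>q. - int m * f y q)"
    by (intro ext) (metis add.commute add_eq_0_iff mult_minus_left)
  then show ?thesis using m by simp
qed

lemma aut_lin:
  assumes "f \<in> qring_auts R3 R3_op" "x \<in> Cr"
  shows "f x = (\<lambda>q. x 0 * f (dl 0) q + x 1 * f (dl 1) q + x 2 * f (dl 2) q)"
proof -
  have d: "dl 0 \<in> Cr" "dl 1 \<in> Cr" "dl 2 \<in> Cr" by (auto intro: dl_in simp: R3_cases)
  have s: "(\<lambda>q. x 0 * dl 0 q) \<in> Cr" "(\<lambda>q. x 1 * dl 1 q) \<in> Cr" "(\<lambda>q. x 2 * dl 2 q) \<in> Cr"
    using d by (auto simp: qring_carrier_def)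
  have s2: "qring_add (\<lambda>q. x 0 * dl 0 q) (\<lambda>q. x 1 * dl 1 q) \<in> Cr"
    using s by (auto simp: qring_carrier_def qring_add_def)
  have "x = qring_add (qring_add (\<lambda>q. x 0 * dl 0 q) (\<lambda>q. x 1 * dl 1 q)) (\<lambda>q. x 2 * dl 2 q)"
    by (subst carrier_eq[OF assms(2)]) (auto simp: qring_add_def dl_def intro!: ext)
  then have "f x = qring_add (qring_add (f (\<lambda>q. x 0 * dl 0 q)) (f (\<lambda>q. x 1 * dl 1 q))) (f (\<lambda>q. x 2 * dl 2 q))"
    using aut_facts(5)[OF assms(1) s2 s(3)] aut_facts(5)[OF assms(1) s(1) s(2)] by simp
  then show ?thesis using aut_scal[OF assms(1) d(1)] aut_scal[OF assms(1) d(2)] aut_scal[OF assms(1) d(3)]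
    by (simp add: qring_add_def)
qed

lemma Bij_R3_facts:
  assumes "\<sigma> \<in> Bij R3"
  shows "\<sigma> 0 \<in> R3" "\<sigma> 1 \<in> R3" "\<sigma> 2 \<in> R3" "\<sigma> 0 \<noteq> \<sigma> 1" "\<sigma> 0 \<noteq> \<sigma> 2" "\<sigma> 1 \<noteq> \<sigma> 2"
proof -
  have b: "bij_betw \<sigma> R3 R3" using assms by (simp add: Bij_def)
  have i: "inj_on \<sigma> R3" using b by (simp add: bij_betw_def)
  show "\<sigma> 0 \<in> R3" "\<sigma> 1 \<in> R3" "\<sigma> 2 \<in> R3" using bij_betwE[OF b] by (auto simp: R3_cases)
  show "\<sigma> 0 \<noteq> \<sigma> 1" "\<sigma> 0 \<noteq> \<sigma> 2" "\<sigma> 1 \<noteq> \<sigma> 2" 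
    using inj_onD[OF i, of 0 1] inj_onD[OF i, of 0 2] inj_onD[OF i, of 1 2] by (auto simp: R3_cases)
qed

lemma op_brute:
  assumes "a \<in> R3" "b \<in> R3" "c \<in> R3" "a \<noteq> b" "a \<noteq> c" "b \<noteq> c" "x \<in> R3" "y \<in> R3"
    "g 0 = a" "g 1 = b" "g 2 = c"
  shows "g (R3_op x y) = R3_op (g x) (g y)"
  using assms unfolding R3_cases by (elim disjE) (simp_all add: R3_op_def)

lemma Bij_preserves:
  assumes "\<sigma> \<in> Bij R3" "x \<in> R3" "y \<in> R3"
  shows "\<sigma> (R3_op x y) = R3_op (\<sigma> x) (\<sigma> y)"
  using op_brute[OF Bij_R3_facts[OF assms(1)] assms(2,3) refl refl refl] .

lemma quandle_carrier: "carrier (quandle_Aut R3 R3_op) = Bij R3"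
  using Bij_preserves by (auto simp: quandle_Aut_def BijGroup_def)

definition psi :: "((nat \<Rightarrow> int) \<Rightarrow> (nat \<Rightarrow> int)) \<Rightarrow> nat \<Rightarrow> nat" where
  "psi f = (\<lambda>i\<in>R3. THE j. j \<in> R3 \<and> f (dl i) = dl j)"

lemma psi_prop:
  assumes "f \<in> qring_auts R3 R3_op" "i \<in> R3"
  shows "psi f i \<in> R3 \<and> f (dl i) = dl (psi f i)"
proof -
  obtain j where j: "j \<in> R3" "f (dl i) = dl j" using aut_dl[OF assms] by blast
  have "(THE j. j \<in> R3 \<and> f (dl i) = dl j) = j"
    using j dl_inj by (intro the_equality) auto
  then show ?thesis using j assms(2) by (simp add: psi_def)
qed

lemma psi_Bij:
  assumes "f \<in> qring_auts R3 R3_op"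
  shows "psi f \<in> Bij R3"
proof -
  have im: "psi f ` R3 \<subseteq> R3" using psi_prop[OF assms] by auto
  have inj: "inj_on (psi f) R3"
  proof (rule inj_onI)
    fix x y assume xy: "x \<in> R3" "y \<in> R3" "psi f x = psi f y"
    then have "f (dl x) = f (dl y)" using psi_prop[OF assms] by metis
    then have "dl x = dl y" using aut_facts(2)[OF assms] dl_in xy(1,2) by (auto dest: inj_onD)
    then show "x = y" by (rule dl_inj)
  qed
  have "psi f ` R3 = R3" by (rule endo_inj_surj[OF _ im inj]) (simp add: R3_def)
  then show ?thesis using inj by (simp add: Bij_def bij_betw_def psi_def)
qed

lemma psi_inj: "inj_on psi (qring_auts R3 R3_op)"
proof (rule inj_onI)
  fix f g assume f: "f \<in> qring_auts R3 R3_op" and g: "g \<in> qring_auts R3 R3_op" and e: "psi f = psi g"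
  have d: "\<And>i. i \<in> R3 \<Longrightarrow> f (dl i) = g (dl i)" using psi_prop[OF f] psi_prop[OF g] e by metis
  have d': "f (dl 0) = g (dl 0)" "f (dl 1) = g (dl 1)" "f (dl 2) = g (dl 2)" using d by (auto simp: R3_cases)
  show "f = g"
  proof
    fix x
    show "f x = g x"
    proof (cases "x \<in> Cr")
      case True
      show ?thesis using aut_lin[OF f True] aut_lin[OF g True] d' by simp
    next
      case False
      then show ?thesis using aut_facts(3)[OF f] aut_facts(3)[OF g] by (simp add: extensional_def)
    qed
  qed
qed

lemma psi_hom:
  assumes f: "f \<in> qring_auts R3 R3_op" and g: "g \<in> qring_auts R3 R3_op"
  shows "psi (compose Cr f g) = compose R3 (psi f) (psi g)"
proof
  fix i
  show "psi (compose Cr f g) i = compose R3 (psi f) (psi g) i"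
  proof (cases "i \<in> R3")
    case True
    have "compose Cr f g (dl i) = dl (psi f (psi g i))"
      using psi_prop[OF g True] psi_prop[OF f] dl_in[OF True] by (simp add: compose_def)
    moreover have "psi f (psi g i) \<in> R3" using psi_prop[OF g True] psi_prop[OF f] by blast
    ultimately have "(THE j. j \<in> R3 \<and> compose Cr f g (dl i) = dl j) = psi f (psi g i)"
      using dl_inj by (intro the_equality) auto
    then show ?thesis using True by (simp add: psi_def compose_def)
  next
    case False
    then show ?thesis by (simp add: psi_def compose_def)
  qed
qed

definition FF :: "(nat \<Rightarrow> nat) \<Rightarrow> (nat \<Rightarrow> int) \<Rightarrow> (nat \<Rightarrow> int)" where
  "FF \<tau> = (\<lambda>x\<in>Cr. \<lambda>q. if q \<in> R3 then x (\<tau> q) else 0)"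

lemma FF_in: "\<tau> \<in> Bij R3 \<Longrightarrow> x \<in> Cr \<Longrightarrow> FF \<tau> x \<in> Cr"
  by (simp add: FF_def qring_carrier_def)

lemma FF_inv:
  assumes "\<tau> \<in> Bij R3" "\<sigma> \<in> Bij R3" "\<And>i. i \<in> R3 \<Longrightarrow> \<tau> (\<sigma> i) = i" "x \<in> Cr"
  shows "FF \<sigma> (FF \<tau> x) = x"
proof
  fix q
  have "\<sigma> q \<in> R3" if "q \<in> R3" using assms(2) that by (auto simp: Bij_def bij_betw_def)
  then show "FF \<sigma> (FF \<tau> x) q = x q"
    using assms FF_in[OF assms(1,4)] by (auto simp: FF_def qring_carrier_def)
qed

lemma mult_gen:
  assumes "a \<in> R3" "b \<in> R3" "c \<in> R3" "a \<noteq> b" "a \<noteq> c" "b \<noteq> c"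
  shows "qring_mult R3 R3_op x y a = x a * y a + x b * y c + x c * y b"
  using assms unfolding R3_cases by (elim disjE) (simp_all add: mult_R3)

lemma FF_mult:
  assumes "\<tau> \<in> Bij R3" "x \<in> Cr" "y \<in> Cr"
  shows "FF \<tau> (qring_mult R3 R3_op x y) = qring_mult R3 R3_op (FF \<tau> x) (FF \<tau> y)"
proof
  fix q
  have m: "qring_mult R3 R3_op x y \<in> Cr" by (simp add: mult_R3 qring_carrier_def R3_cases)
  note f = Bij_R3_facts[OF assms(1)]
  have L: "FF \<tau> (qring_mult R3 R3_op x y) q = (if q \<in> R3 then qring_mult R3 R3_op x y (\<tau> q) else 0)"
    using m by (simp add: FF_def)
  have X: "FF \<tau> x = (\<lambda>q. if q \<in> R3 then x (\<tau> q) else 0)" "FF \<tau> y = (\<lambda>q. if q \<in> R3 then y (\<tau> q) else 0)"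
    using assms by (auto simp: FF_def)
  have z: "0 \<in> R3" "1 \<in> R3" "2 \<in> R3" by (auto simp: R3_cases)
  show "FF \<tau> (qring_mult R3 R3_op x y) q = qring_mult R3 R3_op (FF \<tau> x) (FF \<tau> y) q"
  proof (cases "q \<in> R3")
    case False
    then have "q \<noteq> 0" "q \<noteq> 1" "q \<noteq> 2" by (auto simp: R3_cases)
    then show ?thesis using L False by (simp add: mult_R3)
  next
    case True
    have g0: "qring_mult R3 R3_op x y (\<tau> 0) = x (\<tau> 0) * y (\<tau> 0) + x (\<tau> 1) * y (\<tau> 2) + x (\<tau> 2) * y (\<tau> 1)"
      using mult_gen f by metis
    have g1: "qring_mult R3 R3_op x y (\<tau> 1) = x (\<tau> 1) * y (\<tau> 1) + x (\<tau> 0) * y (\<tau> 2) + x (\<tau> 2) * y (\<tau> 0)"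
      using mult_gen f by metis
    have g2: "qring_mult R3 R3_op x y (\<tau> 2) = x (\<tau> 2) * y (\<tau> 2) + x (\<tau> 0) * y (\<tau> 1) + x (\<tau> 1) * y (\<tau> 0)"
      using mult_gen f by metis
    from True have "q = 0 \<or> q = 1 \<or> q = 2" by (simp add: R3_cases)
    then show ?thesis
    proof (elim disjE)
      assume "q = 0" then show ?thesis unfolding L X using z g0 by (simp add: mult_R3)
    next
      assume "q = 1" then show ?thesis unfolding L X using z g1 by (simp add: mult_R3)
    next
      assume "q = 2" then show ?thesis unfolding L X using z g2 by (simp add: mult_R3)
    qed
  qed
qed

lemma FF_aut:
  assumes "\<tau> \<in> Bij R3"
  shows "FF \<tau> \<in> qring_auts R3 R3_op"
proof -
  define \<sigma> where "\<sigma> = (\<lambda>x\<in>R3. inv_into R3 \<tau> x)"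
  have s: "\<sigma> \<in> Bij R3" using restrict_inv_into_Bij[OF assms] by (simp add: \<sigma>_def)
  have b: "bij_betw \<tau> R3 R3" using assms by (simp add: Bij_def)
  have st: "\<sigma> (\<tau> i) = i" if "i \<in> R3" for i
    using b that bij_betwE[OF b] by (simp add: \<sigma>_def bij_betw_def inv_into_f_f)
  have ts: "\<tau> (\<sigma> i) = i" if "i \<in> R3" for i
    using b that by (simp add: \<sigma>_def bij_betw_def f_inv_into_f)
  have "bij_betw (FF \<tau>) Cr Cr"
    by (rule bij_betw_byWitness[where f'="FF \<sigma>"])
       (auto intro: FF_inv[OF s assms st] FF_inv[OF assms s ts] FF_in[OF assms] FF_in[OF s])
  moreover have "FF \<tau> \<in> extensional Cr" by (simp add: FF_def)
  moreover have "FF \<tau> (qring_add x y) = qring_add (FF \<tau> x) (FF \<tau> y)" if "x \<in> Cr" "y \<in> Cr" for x y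
    using that by (auto simp: FF_def qring_add_def qring_carrier_def intro!: ext)
  ultimately show ?thesis using FF_mult[OF assms] by (simp add: qring_auts_def Bij_def)
qed

lemma psi_FF:
  assumes s: "\<sigma> \<in> Bij R3"
  shows "psi (FF (\<lambda>x\<in>R3. inv_into R3 \<sigma> x)) = \<sigma>"
proof -
  define \<tau> where "\<tau> = (\<lambda>x\<in>R3. inv_into R3 \<sigma> x)"
  have t: "\<tau> \<in> Bij R3" using restrict_inv_into_Bij[OF s] by (simp add: \<tau>_def)
  have b: "bij_betw \<sigma> R3 R3" using s by (simp add: Bij_def)
  have st: "\<tau> (\<sigma> i) = i" if "i \<in> R3" for i
    using b that bij_betwE[OF b] by (simp add: \<tau>_def bij_betw_def inv_into_f_f)
  have ts: "\<sigma> (\<tau> i) = i" if "i \<in> R3" for i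
    using b that by (simp add: \<tau>_def bij_betw_def f_inv_into_f)
  have tR: "\<tau> i \<in> R3" if "i \<in> R3" for i using t that by (auto simp: Bij_def bij_betw_def)
  have sR: "\<sigma> i \<in> R3" if "i \<in> R3" for i using b that by (auto simp: bij_betw_def)
  have a: "FF \<tau> \<in> qring_auts R3 R3_op" by (rule FF_aut[OF t])
  show ?thesis unfolding \<tau>_def[symmetric]
  proof
    fix i
    show "psi (FF \<tau>) i = \<sigma> i"
    proof (cases "i \<in> R3")
      case True
      have "FF \<tau> (dl i) = dl (\<sigma> i)"
      proof
        fix q
        show "FF \<tau> (dl i) q = dl (\<sigma> i) q"
          using dl_in[OF True] sR[OF True] st[OF True] ts tR
          by (auto simp: FF_def dl_def)
      qed
      then have "dl (psi (FF \<tau>) i) = dl (\<sigma> i)" using psi_prop[OF a True] by simp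
      then show ?thesis by (rule dl_inj)
    next
      case False
      then show ?thesis using s by (simp add: psi_def Bij_def extensional_def)
    qed
  qed
qed

lemma iso1: "psi \<in> iso (qring_Aut R3 R3_op) (quandle_Aut R3 R3_op)"
proof -
  have cq: "carrier (qring_Aut R3 R3_op) = qring_auts R3 R3_op" by (simp add: qring_Aut_def BijGroup_def)
  have sub: "qring_auts R3 R3_op \<subseteq> Bij Cr" by (auto simp: qring_auts_def)
  have mq: "f \<otimes>\<^bsub>qring_Aut R3 R3_op\<^esub> g = compose Cr f g" if "f \<in> qring_auts R3 R3_op" "g \<in> qring_auts R3 R3_op" for f g
    using that sub by (auto simp: qring_Aut_def BijGroup_def)
  have mu: "f \<otimes>\<^bsub>quandle_Aut R3 R3_op\<^esub> g = compose R3 f g" if "f \<in> Bij R3" "g \<in> Bij R3" for f g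
    using that by (auto simp: quandle_Aut_def BijGroup_def)
  have hom: "psi \<in> hom (qring_Aut R3 R3_op) (quandle_Aut R3 R3_op)"
    unfolding hom_def using psi_Bij psi_hom mq mu cq quandle_carrier by auto
  have "psi ` qring_auts R3 R3_op = Bij R3"
  proof
    show "psi ` qring_auts R3 R3_op \<subseteq> Bij R3" using psi_Bij by auto
    show "Bij R3 \<subseteq> psi ` qring_auts R3 R3_op"
    proof
      fix \<sigma> assume s: "\<sigma> \<in> Bij R3"
      have "FF (\<lambda>x\<in>R3. inv_into R3 \<sigma> x) \<in> qring_auts R3 R3_op"
        using FF_aut restrict_inv_into_Bij[OF s] by blast
      with psi_FF[OF s] show "\<sigma> \<in> psi ` qring_auts R3 R3_op" by (metis image_eqI)
    qed
  qed
  then have "bij_betw psi (carrier (qring_Aut R3 R3_op)) (carrier (quandle_Aut R3 R3_op))"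
    using psi_inj cq quandle_carrier by (simp add: bij_betw_def)
  with hom show ?thesis by (simp add: iso_def)
qed


definition chi :: "(nat \<Rightarrow> nat) \<Rightarrow> nat \<Rightarrow> nat" where
  "chi p = (\<lambda>i\<in>R3. p (i + 1) - 1)"

lemma R3_shift: "i \<in> R3 \<longleftrightarrow> i + 1 \<in> {1..3::nat}" by (auto simp: R3_def)

lemma perm_val: "p permutes {1..3::nat} \<Longrightarrow> i \<in> R3 \<Longrightarrow> p (i + 1) \<in> {1..3}"
proof -
  assume p: "p permutes {1..3::nat}" and i: "i \<in> R3"
  have "i + 1 \<in> {1..3}" using i by (simp only: R3_shift)
  then show "p (i + 1) \<in> {1..3}" using permutes_in_image[OF p] by (simp only:)
qed

lemma chi_Bij:
  assumes p: "p permutes {1..3::nat}"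
  shows "chi p \<in> Bij R3"
proof -
  have im: "chi p ` R3 \<subseteq> R3"
  proof
    fix j assume "j \<in> chi p ` R3"
    then obtain i where i: "i \<in> R3" "j = chi p i" by blast
    then show "j \<in> R3" using perm_val[OF p i(1)] by (auto simp: chi_def R3_def)
  qed
  have inj: "inj_on (chi p) R3"
  proof (rule inj_onI)
    fix x y assume xy: "x \<in> R3" "y \<in> R3" "chi p x = chi p y"
    then have "p (x + 1) - 1 = p (y + 1) - 1" by (simp add: chi_def)
    moreover have "p (x + 1) \<ge> 1" "p (y + 1) \<ge> 1" using perm_val[OF p xy(1)] perm_val[OF p xy(2)] by auto
    ultimately have "p (x + 1) = p (y + 1)" by linarith
    then have "x + 1 = y + 1" using permutes_inj[OF p] by (simp add: inj_eq)
    then show "x = y" by simp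
  qed
  have "chi p ` R3 = R3" by (rule endo_inj_surj[OF _ im inj]) (simp add: R3_def)
  then show ?thesis using inj by (simp add: Bij_def bij_betw_def chi_def)
qed

lemma iso2: "chi \<in> iso (sym_group 3) (quandle_Aut R3 R3_op)"
proof -
  have mu: "f \<otimes>\<^bsub>quandle_Aut R3 R3_op\<^esub> g = compose R3 f g" if "f \<in> Bij R3" "g \<in> Bij R3" for f g
    using that by (auto simp: quandle_Aut_def BijGroup_def)
  have hom: "chi \<in> hom (sym_group 3) (quandle_Aut R3 R3_op)"
  proof (rule homI)
    fix p assume "p \<in> carrier (sym_group 3)"
    then show "chi p \<in> carrier (quandle_Aut R3 R3_op)"
      using chi_Bij quandle_carrier by (simp add: sym_group_carrier)
  next
    fix p q assume "p \<in> carrier (sym_group 3)" "q \<in> carrier (sym_group 3)"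
    then have p: "p permutes {1..3::nat}" and q: "q permutes {1..3::nat}" by (auto simp: sym_group_carrier)
    have "chi (p \<circ> q) = compose R3 (chi p) (chi q)"
    proof
      fix i
      show "chi (p \<circ> q) i = compose R3 (chi p) (chi q) i"
      proof (cases "i \<in> R3")
        case True
        have "q (i + 1) \<in> {1..3}" by (rule perm_val[OF q True])
        then have "q (i + 1) - 1 \<in> R3" "q (i + 1) - 1 + 1 = q (i + 1)" by (auto simp: R3_def)
        then show ?thesis using True by (simp add: chi_def compose_def)
      next
        case False then show ?thesis by (simp add: chi_def compose_def)
      qed
    qed
    then show "chi (p \<otimes>\<^bsub>sym_group 3\<^esub> q) = chi p \<otimes>\<^bsub>quandle_Aut R3 R3_op\<^esub> chi q"
      using mu chi_Bij[OF p] chi_Bij[OF q] by (simp add: sym_group_mult)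
  qed
  have inj: "inj_on chi (carrier (sym_group 3))"
  proof (rule inj_onI)
    fix p q assume "p \<in> carrier (sym_group 3)" "q \<in> carrier (sym_group 3)" and e: "chi p = chi q"
    then have p: "p permutes {1..3::nat}" and q: "q permutes {1..3::nat}" by (auto simp: sym_group_carrier)
    show "p = q"
    proof
      fix k
      show "p k = q k"
      proof (cases "k \<in> {1..3}")
        case True
        then have i: "k - 1 \<in> R3" "k - 1 + 1 = k" by (auto simp: R3_def)
        have "chi p (k - 1) = chi q (k - 1)" using e by simp
        then have "p k - 1 = q k - 1" using i by (simp add: chi_def)
        moreover have "p k \<ge> 1" "q k \<ge> 1" using perm_val[OF p i(1)] perm_val[OF q i(1)] i(2) by auto
        ultimately show ?thesis by simp
      next
        case False
        then show ?thesis using permutes_not_in[OF p] permutes_not_in[OF q] by simp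
      qed
    qed
  qed
  have surj: "Bij R3 \<subseteq> chi ` carrier (sym_group 3)"
  proof
    fix \<sigma> assume s: "\<sigma> \<in> Bij R3"
    define p where "p = (\<lambda>k. if k \<in> {1..3::nat} then \<sigma> (k - 1) + 1 else k)"
    have b: "bij_betw \<sigma> R3 R3" using s by (simp add: Bij_def)
    have im: "p ` {1..3} \<subseteq> {1..3}"
    proof
      fix j assume "j \<in> p ` {1..3}"
      then obtain k where k: "k \<in> {1..3}" "j = p k" by blast
      then have "k - 1 \<in> R3" by (auto simp: R3_def)
      then have "\<sigma> (k - 1) \<in> R3" using bij_betwE[OF b] by blast
      then show "j \<in> {1..3}" using k by (auto simp: p_def R3_def)
    qed
    have injp: "inj_on p {1..3}"
    proof (rule inj_onI)
      fix x y assume xy: "x \<in> {1..3::nat}" "y \<in> {1..3::nat}" "p x = p y"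
      then have "\<sigma> (x - 1) = \<sigma> (y - 1)" by (simp add: p_def)
      moreover have "x - 1 \<in> R3" "y - 1 \<in> R3" using xy by (auto simp: R3_def)
      ultimately have "x - 1 = y - 1" using b by (auto simp: bij_betw_def dest: inj_onD)
      then show "x = y" using xy by auto
    qed
    have "p ` {1..3} = {1..3}" by (rule endo_inj_surj[OF _ im injp]) simp
    then have bp: "bij_betw p {1..3} {1..3}" using injp by (simp add: bij_betw_def)
    have "\<And>x. x \<notin> {1..3} \<Longrightarrow> p x = x" unfolding p_def by auto
    then have "p permutes {1..3}" using bij_imp_permutes[OF bp] by blast
    moreover have "chi p = \<sigma>"
    proof
      fix i
      show "chi p i = \<sigma> i"
      proof (cases "i \<in> R3")
        case True
        then have "i + 1 \<in> {1..3}" by (simp add: R3_shift)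
        then show ?thesis using True by (simp add: chi_def p_def)
      next
        case False
        then show ?thesis using s by (simp add: chi_def Bij_def extensional_def)
      qed
    qed
    ultimately show "\<sigma> \<in> chi ` carrier (sym_group 3)"
      by (intro image_eqI[of _ _ p]) (simp_all add: sym_group_carrier)
  qed
  have "chi ` carrier (sym_group 3) \<subseteq> Bij R3" using chi_Bij by (auto simp: sym_group_carrier)
  with surj inj have "bij_betw chi (carrier (sym_group 3)) (carrier (quandle_Aut R3 R3_op))"
    by (simp add: bij_betw_def quandle_carrier)
  with hom show ?thesis by (simp add: iso_def)
qed

theorem proposition6p3:
  shows "qring_Aut R3 R3_op \<cong> sym_group 3 \<and> sym_group 3 \<cong> quandle_Aut R3 R3_op"
proof -
  have a: "sym_group 3 \<cong> quandle_Aut R3 R3_op" using iso2 by (rule is_isoI)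
  have b: "qring_Aut R3 R3_op \<cong> quandle_Aut R3 R3_op" using iso1 by (rule is_isoI)
  have c: "quandle_Aut R3 R3_op \<cong> sym_group 3" using group.iso_sym[OF sym_group_is_group a] .
  show ?thesis using iso_trans[OF b c] a by simp
qed

end
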